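(* Let $\nu$ be a Krull valuation on $\mathbb{K}[x]$, $\mu$ a valuation on $\overline{\mathbb{K}}[x]$ extending $\nu$, $Q$ a key polynomial for $\nu$ of degree $n$, and $a$ an optimizing root of $Q$. Assume $\nu(Q)\in\mu\overline{\mathbb{K}}$ and let $e$ be the least positive integer with $e\nu(Q)\in\mu\mathbb{K}(a)$. Then for every $g\in\mathbb{K}[x]$ with $\deg g<ne$ we have $\mu_{x-a}(g)=\mu(g)=\nu_Q(g)$.
   Context: $\overline{\mathbb{K}}$ is an algebraic closure of $\mathbb{K}$; $\mu\overline{\mathbb{K}}$ and $\mu\mathbb{K}(a)$ are the value groups of $\mu$ restricted to $\overline{\mathbb{K}}$ and to $\mathbb{K}(a)$. Truncations: $\nu_Q(f)=\min_i\nu(f_iQ^i)$ where $f=\sum f_iQ^i$ is the $Q$-expansion ($\deg f_i<\deg Q$), and $\mu_{x-a}(\sum_i c_i(x-a)^i)=\min_i\{\mu(c_i)+i\mu(x-a)\}$. Optimizing root: a root $c$ of $Q$ maximizing $\mu(x-c)$ among roots of $Q$. Key polynomials: for nonzero $f\in\mathbb{K}[x]$, with Hasse derivatives $\partial_bf=\sum_{i\ge b}\binom{i}{b}a_ix^{i-b}$ for $f=\sum a_ix^i$, $\epsilon(f)=\max_{1\le b\le\deg f}(\nu(f)-\nu(\partial_bf))/b$ if $\deg f>0$ and $\epsilon(f)=-\infty$ if $f$ is constant; a monic $Q$ is a key polynomial for $\nu$ if $\epsilon(f)\ge\epsilon(Q)$ implies $\deg f\ge\deg Q$ for all $f$. 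*)

theory Defs
  imports "HOL-Computational_Algebra.Polynomial"
begin

definition is_subfield :: "'a::field set \<Rightarrow> bool" where
  "is_subfield F \<longleftrightarrow> 0 \<in> F \<and> 1 \<in> F \<and>
     (\<forall>x\<in>F. \<forall>y\<in>F. x + y \<in> F \<and> x - y \<in> F \<and> x * y \<in> F) \<and>
     (\<forall>x\<in>F. x \<noteq> 0 \<longrightarrow> inverse x \<in> F)"

text \<open>The polynomial ring F[x], as polynomials over the ambient field with coefficients in F.\<close>
definition polys_over :: "'a::field set \<Rightarrow> 'a poly set" where
  "polys_over F = {p. \<forall>i. coeff p i \<in> F}"

definition algebraic_over :: "'a::field set \<Rightarrow> 'a \<Rightarrow> bool" where
  "algebraic_over F y \<longleftrightarrow> (\<exists>p\<in>polys_over F. p \<noteq> 0 \<and> poly p y = 0)"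

definition is_algebraic_closure :: "'a::field set \<Rightarrow> 'a set \<Rightarrow> bool" where
  "is_algebraic_closure K Kb \<longleftrightarrow> is_subfield K \<and> is_subfield Kb \<and> K \<subseteq> Kb \<and>
     (\<forall>y\<in>Kb. algebraic_over K y) \<and>
     (\<forall>p\<in>polys_over Kb. degree p > 0 \<longrightarrow> (\<exists>y\<in>Kb. poly p y = 0))"

definition adjoin :: "'a::field set \<Rightarrow> 'a \<Rightarrow> 'a set" where
  "adjoin K a = \<Inter>{F. is_subfield F \<and> K \<subseteq> F \<and> a \<in> F}"

text \<open>A (Krull) valuation on F[x] with values in the ordered abelian group 'g.
  Only the values at nonzero polynomials matter (the value of 0 is \<infinity>).\<close>
definition is_valuation :: "'a::field set \<Rightarrow> ('a poly \<Rightarrow> 'g::linordered_ab_group_add) \<Rightarrow> bool" where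
  "is_valuation F v \<longleftrightarrow>
     (\<forall>f\<in>polys_over F. \<forall>g\<in>polys_over F. f \<noteq> 0 \<longrightarrow> g \<noteq> 0 \<longrightarrow>
        v (f * g) = v f + v g \<and> (f + g \<noteq> 0 \<longrightarrow> min (v f) (v g) \<le> v (f + g)))"

definition value_group :: "('a::field poly \<Rightarrow> 'g) \<Rightarrow> 'a set \<Rightarrow> 'g set" where
  "value_group v L = {v [:c:] | c. c \<in> L \<and> c \<noteq> 0}"

fun nsmul :: "nat \<Rightarrow> 'g::monoid_add \<Rightarrow> 'g" where
  "nsmul 0 x = 0"
| "nsmul (Suc n) x = x + nsmul n x"

text \<open>i-th coefficient of the Q-expansion f = sum f_i Q^i (deg f_i < deg Q).\<close>
definition Q_coeff :: "'a::field poly \<Rightarrow> 'a poly \<Rightarrow> nat \<Rightarrow> 'a poly" where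
  "Q_coeff Q f i = (f div Q ^ i) mod Q"

definition trunc_Q :: "('a::field poly \<Rightarrow> 'g::linorder) \<Rightarrow> 'a poly \<Rightarrow> 'a poly \<Rightarrow> 'g" where
  "trunc_Q v Q f = Min {v (Q_coeff Q f i * Q ^ i) | i. i \<le> degree f \<and> Q_coeff Q f i \<noteq> 0}"

text \<open>mu_{x-a}(sum c_i (x-a)^i) = min (mu(c_i) + i mu(x-a)); c_i = coefficients of f(x+a).\<close>
definition trunc_lin :: "('a::field poly \<Rightarrow> 'g::linordered_ab_group_add) \<Rightarrow> 'a \<Rightarrow> 'a poly \<Rightarrow> 'g" where
  "trunc_lin v a f = Min {v [:coeff (pcompose f [:a, 1:]) i:] + nsmul i (v [:-a, 1:]) | i.
                          i \<le> degree f \<and> coeff (pcompose f [:a, 1:]) i \<noteq> 0}"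

definition hasse :: "nat \<Rightarrow> 'a::field poly \<Rightarrow> 'a poly" where
  "hasse b f = (\<Sum>i\<in>{b..degree f}. monom (of_nat (i choose b) * coeff f i) (i - b))"

text \<open>eps_ge v f Q expresses  epsilon(f) >= epsilon(Q), where
  epsilon(f) = max_{1<=b<=deg f} (v f - v (d_b f)) / b  (terms with d_b f = 0 are -\<infinity>),
  epsilon(f) = -\<infinity> for constant f.  The quotients live in the divisible hull of the
  value group; the comparison max_b A_b/b >= max_c B_c/c is unfolded by clearing
  denominators:  exists b with c*A_b >= b*B_c for all c.\<close>
definition eps_ge :: "('a::field poly \<Rightarrow> 'g::linordered_ab_group_add) \<Rightarrow> 'a poly \<Rightarrow> 'a poly \<Rightarrow> bool" where
  "eps_ge v f Q \<longleftrightarrow>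
     (if degree f = 0 then degree Q = 0
      else (\<exists>b\<in>{1..degree f}. hasse b f \<noteq> 0 \<and>
              (\<forall>c\<in>{1..degree Q}. hasse c Q \<noteq> 0 \<longrightarrow>
                 nsmul b (v Q - v (hasse c Q)) \<le> nsmul c (v f - v (hasse b f)))))"

definition is_key_poly :: "'a::field set \<Rightarrow> ('a poly \<Rightarrow> 'g::linordered_ab_group_add) \<Rightarrow> 'a poly \<Rightarrow> bool" where
  "is_key_poly K v Q \<longleftrightarrow> Q \<in> polys_over K \<and> lead_coeff Q = 1 \<and>
     (\<forall>f\<in>polys_over K. f \<noteq> 0 \<longrightarrow> eps_ge v f Q \<longrightarrow> degree Q \<le> degree f)"

definition optimizing_root :: "'a::field set \<Rightarrow> ('a poly \<Rightarrow> 'g::linorder) \<Rightarrow> 'a poly \<Rightarrow> 'a \<Rightarrow> bool" where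
  "optimizing_root Kb mu Q a \<longleftrightarrow> a \<in> Kb \<and> poly Q a = 0 \<and>
     (\<forall>c\<in>Kb. poly Q c = 0 \<longrightarrow> mu [:-c, 1:] \<le> mu [:-a, 1:])"

end

theory Submission
  imports Defs
begin



lemma sf_0: "is_subfield F \<Longrightarrow> 0 \<in> F" by (simp add: is_subfield_def)
lemma sf_1: "is_subfield F \<Longrightarrow> 1 \<in> F" by (simp add: is_subfield_def)
lemma sf_add: "is_subfield F \<Longrightarrow> x \<in> F \<Longrightarrow> y \<in> F \<Longrightarrow> x + y \<in> F" by (simp add: is_subfield_def)
lemma sf_diff: "is_subfield F \<Longrightarrow> x \<in> F \<Longrightarrow> y \<in> F \<Longrightarrow> x - y \<in> F" by (simp add: is_subfield_def)
lemma sf_mult: "is_subfield F \<Longrightarrow> x \<in> F \<Longrightarrow> y \<in> F \<Longrightarrow> x * y \<in> F" by (simp add: is_subfield_def)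
lemma sf_uminus: "is_subfield F \<Longrightarrow> x \<in> F \<Longrightarrow> - x \<in> F"
  using sf_diff[of F 0 x] sf_0[of F] by simp
lemma sf_inverse: "is_subfield F \<Longrightarrow> x \<in> F \<Longrightarrow> inverse x \<in> F"
  by (cases "x = 0") (auto simp: is_subfield_def)
lemma sf_divide: "is_subfield F \<Longrightarrow> x \<in> F \<Longrightarrow> y \<in> F \<Longrightarrow> x / y \<in> F"
  by (simp add: divide_inverse sf_mult sf_inverse)
lemma sf_of_nat: "is_subfield F \<Longrightarrow> of_nat n \<in> F"
  by (induction n) (auto simp: sf_0 sf_1 sf_add)
lemma sf_sum: "is_subfield F \<Longrightarrow> (\<And>i. i \<in> A \<Longrightarrow> f i \<in> F) \<Longrightarrow> sum f A \<in> F"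
  by (induction A rule: infinite_finite_induct) (auto simp: sf_0 sf_add)
lemma sf_prod: "is_subfield F \<Longrightarrow> (\<And>i. i \<in> A \<Longrightarrow> f i \<in> F) \<Longrightarrow> prod f A \<in> F"
  by (induction A rule: infinite_finite_induct) (auto simp: sf_1 sf_mult)

lemma sf_power: "is_subfield F \<Longrightarrow> x \<in> F \<Longrightarrow> x ^ n \<in> F"
  by (induction n) (auto simp: sf_1 sf_mult)

lemma po_coeff: "p \<in> polys_over F \<Longrightarrow> coeff p i \<in> F" by (simp add: polys_over_def)
lemma po_I: "(\<And>i. coeff p i \<in> F) \<Longrightarrow> p \<in> polys_over F" by (simp add: polys_over_def)

context fixes F :: "'a::field set" assumes sf: "is_subfield F"
begin
lemma po_0: "0 \<in> polys_over F" by (rule po_I) (simp add: sf_0 sf)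
lemma po_1: "1 \<in> polys_over F" by (rule po_I) (simp add: coeff_1 sf_0 sf_1 sf)
lemma po_const: "c \<in> F \<Longrightarrow> [:c:] \<in> polys_over F" by (rule po_I) (simp add: coeff_pCons split: nat.split add: sf_0 sf)
lemma po_pCons: "c \<in> F \<Longrightarrow> p \<in> polys_over F \<Longrightarrow> pCons c p \<in> polys_over F"
  by (rule po_I) (simp add: coeff_pCons split: nat.split add: po_coeff)
lemma po_lin: "b \<in> F \<Longrightarrow> [:-b,1:] \<in> polys_over F"
  by (intro po_pCons po_const sf_uminus sf_1 sf)
lemma po_add: "p \<in> polys_over F \<Longrightarrow> q \<in> polys_over F \<Longrightarrow> p + q \<in> polys_over F"
  by (rule po_I) (simp add: sf_add sf po_coeff)
lemma po_diff: "p \<in> polys_over F \<Longrightarrow> q \<in> polys_over F \<Longrightarrow> p - q \<in> polys_over F"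
  by (rule po_I) (simp add: sf_diff sf po_coeff)
lemma po_uminus: "p \<in> polys_over F \<Longrightarrow> - p \<in> polys_over F"
  by (rule po_I) (simp add: sf_uminus sf po_coeff)
lemma po_mult: "p \<in> polys_over F \<Longrightarrow> q \<in> polys_over F \<Longrightarrow> p * q \<in> polys_over F"
  by (rule po_I) (auto simp: coeff_mult intro!: sf_sum sf_mult sf po_coeff)
lemma po_smult: "c \<in> F \<Longrightarrow> p \<in> polys_over F \<Longrightarrow> smult c p \<in> polys_over F"
  by (rule po_I) (simp add: sf_mult sf po_coeff)
lemma po_monom: "c \<in> F \<Longrightarrow> monom c k \<in> polys_over F"
  by (rule po_I) (simp add: coeff_monom sf_0 sf)
lemma po_sum: "(\<And>i. i \<in> A \<Longrightarrow> f i \<in> polys_over F) \<Longrightarrow> sum f A \<in> polys_over F"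
  by (induction A rule: infinite_finite_induct) (auto simp: po_0 po_add)
lemma po_prod: "(\<And>i. i \<in> A \<Longrightarrow> f i \<in> polys_over F) \<Longrightarrow> prod f A \<in> polys_over F"
  by (induction A rule: infinite_finite_induct) (auto simp: po_1 po_mult)
lemma po_prod_list: "(\<And>x. x \<in> set xs \<Longrightarrow> f x \<in> polys_over F) \<Longrightarrow> prod_list (map f xs) \<in> polys_over F"
  by (induction xs) (auto simp: po_1 po_mult)
lemma po_power: "p \<in> polys_over F \<Longrightarrow> p ^ k \<in> polys_over F"
  by (induction k) (auto simp: po_1 po_mult)
lemma po_hasse: "p \<in> polys_over F \<Longrightarrow> hasse b p \<in> polys_over F"
  unfolding hasse_def by (intro po_sum po_monom sf_mult sf_of_nat sf po_coeff)
lemma po_poly: "p \<in> polys_over F \<Longrightarrow> x \<in> F \<Longrightarrow> poly p x \<in> F"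
  by (simp add: poly_altdef sf_sum sf_mult sf sf_power po_coeff)
lemma po_pcompose: "p \<in> polys_over F \<Longrightarrow> q \<in> polys_over F \<Longrightarrow> pcompose p q \<in> polys_over F"
proof (induction p)
  case (pCons a p)
  have "a \<in> F" "p \<in> polys_over F" using pCons.prems(1)
    by (metis coeff_pCons_0 po_coeff, metis (no_types) coeff_pCons_Suc po_coeff po_I)
  then show ?case using pCons by (simp add: pcompose_pCons po_add po_const po_mult)
qed (simp add: po_0)
end



lemma nsmul_0r[simp]: "nsmul n (0::'g::monoid_add) = 0" by (induction n) auto
lemma nsmul_1[simp]: "nsmul (Suc 0) x = x" by simp
lemma nsmul_addn: "nsmul (m + n) (x::'g::monoid_add) = nsmul m x + nsmul n x"
  by (induction m) (auto simp: add.assoc)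
lemma nsmul_add: "nsmul n ((x::'g::comm_monoid_add) + y) = nsmul n x + nsmul n y"
  by (induction n) (auto simp: algebra_simps)
lemma nsmul_uminus: "nsmul n (- (x::'g::ab_group_add)) = - nsmul n x"
  by (induction n) auto
lemma nsmul_diff: "nsmul n ((x::'g::ab_group_add) - y) = nsmul n x - nsmul n y"
  using nsmul_add[of n x "-y"] nsmul_uminus[of n y] by simp
lemma nsmul_mult: "nsmul (m * n) (x::'g::monoid_add) = nsmul m (nsmul n x)"
  by (induction m) (auto simp: nsmul_addn)
lemma nsmul_comm: "nsmul m (nsmul n (x::'g::monoid_add)) = nsmul n (nsmul m x)"
  by (metis mult.commute nsmul_mult)
lemma nsmul_mono: "(x::'g::ordered_ab_group_add) \<le> y \<Longrightarrow> nsmul n x \<le> nsmul n y"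
  by (induction n) (auto intro: add_mono)
lemma nsmul_strict: "(x::'g::ordered_ab_group_add) < y \<Longrightarrow> 0 < n \<Longrightarrow> nsmul n x < nsmul n y"
proof (induction n)
  case (Suc n) then show ?case
    by (cases n) (auto intro: add_less_le_mono nsmul_mono)
qed simp
lemma nsmul_mono_n: "0 \<le> (x::'g::ordered_ab_group_add) \<Longrightarrow> m \<le> n \<Longrightarrow> nsmul m x \<le> nsmul n x"
proof -
  assume "0 \<le> x" "m \<le> n"
  then obtain k where "n = m + k" using le_Suc_ex by blast
  moreover have "0 \<le> nsmul k x" using nsmul_mono[OF \<open>0 \<le> x\<close>, of k] by simp
  ultimately show ?thesis by (simp add: nsmul_addn)
qed
lemma nsmul_Suc_right: "nsmul (Suc n) (x::'g::monoid_add) = nsmul n x + x"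
  using nsmul_addn[of n 1 x] by simp

lemma lin_double0: "(x::'g::linordered_ab_group_add) + x = 0 \<Longrightarrow> x = 0"
  by (metis add_less_zeroD add_neg_neg add_pos_pos less_irrefl linorder_neqE)

context fixes F :: "'a::field set" and v :: "'a poly \<Rightarrow> 'g::linordered_ab_group_add"
  assumes sf: "is_subfield F" and val: "is_valuation F v"
begin

lemma v_mult: "p \<in> polys_over F \<Longrightarrow> q \<in> polys_over F \<Longrightarrow> p \<noteq> 0 \<Longrightarrow> q \<noteq> 0 \<Longrightarrow> v (p * q) = v p + v q"
  using val by (simp add: is_valuation_def)
lemma v_add: "p \<in> polys_over F \<Longrightarrow> q \<in> polys_over F \<Longrightarrow> p \<noteq> 0 \<Longrightarrow> q \<noteq> 0 \<Longrightarrow> p + q \<noteq> 0 \<Longrightarrow> min (v p) (v q) \<le> v (p + q)"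
  using val by (simp add: is_valuation_def)
lemma v_1: "v 1 = 0"
  using v_mult[of 1 1] po_1[OF sf] by simp
lemma v_m1: "v [:-1:] = 0"
proof -
  have "[:-1:] * [:-1:] = (1::'a poly)" by (simp add: one_pCons)
  then have "v [:-1:] + v [:-1:] = 0" using v_mult[of "[:-1:]" "[:-1:]"] v_1
    po_const[OF sf] sf_uminus[OF sf sf_1[OF sf]] by (auto simp: one_pCons[symmetric])
  then show ?thesis by (rule lin_double0)
qed
lemma v_uminus: "p \<in> polys_over F \<Longrightarrow> p \<noteq> 0 \<Longrightarrow> v (- p) = v p"
proof -
  assume p: "p \<in> polys_over F" "p \<noteq> 0"
  have "- p = [:-1:] * p" by simp
  then show ?thesis using v_mult[of "[:-1:]" p] p v_m1 po_const[OF sf] sf_uminus[OF sf sf_1[OF sf]] by auto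
qed
lemma v_strict: "p \<in> polys_over F \<Longrightarrow> q \<in> polys_over F \<Longrightarrow> p \<noteq> 0 \<Longrightarrow> q \<noteq> 0 \<Longrightarrow> v p < v q \<Longrightarrow> v (p + q) = v p"
proof -
  assume a: "p \<in> polys_over F" "q \<in> polys_over F" "p \<noteq> 0" "q \<noteq> 0" "v p < v q"
  have nz: "p + q \<noteq> 0"
  proof
    assume "p + q = 0" then have "q = - p" by (simp add: add_eq_0_iff)
    then show False using a v_uminus by auto
  qed
  have 1: "v p \<le> v (p + q)" using v_add[of p q] a nz by auto
  have "p = (p + q) + (- q)" by simp
  then have "min (v (p+q)) (v (-q)) \<le> v p"
    using v_add[of "p+q" "-q"] a nz po_add[OF sf] po_uminus[OF sf] by (metis neg_equal_0_iff_equal)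
  then have "v (p + q) \<le> v p" using a v_uminus by (auto simp: min_def split: if_splits)
  with 1 show ?thesis by simp
qed
lemma v_power: "p \<in> polys_over F \<Longrightarrow> p \<noteq> 0 \<Longrightarrow> v (p ^ k) = nsmul k (v p)"
  by (induction k) (auto simp: v_1 v_mult po_power[OF sf])
lemma v_prod_list: "(\<And>x. x \<in> set xs \<Longrightarrow> f x \<in> polys_over F \<and> f x \<noteq> 0) \<Longrightarrow>
   v (prod_list (map f xs)) = sum_list (map (\<lambda>x. v (f x)) xs)"
proof (induction xs)
  case (Cons a xs)
  have "prod_list (map f xs) \<noteq> 0" using Cons.prems by (auto simp: prod_list_zero_iff)
  then show ?case using Cons by (auto simp: v_mult po_prod_list[OF sf])
qed (simp add: v_1)
lemma v_smult: "c \<in> F \<Longrightarrow> c \<noteq> 0 \<Longrightarrow> p \<in> polys_over F \<Longrightarrow> p \<noteq> 0 \<Longrightarrow> v (smult c p) = v [:c:] + v p"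
  using v_mult[of "[:c:]" p] po_const[OF sf] by simp
lemma v_const_mult: "x \<in> F \<Longrightarrow> y \<in> F \<Longrightarrow> x \<noteq> 0 \<Longrightarrow> y \<noteq> 0 \<Longrightarrow> v [:x*y:] = v [:x:] + v [:y:]"
  using v_mult[of "[:x:]" "[:y:]"] po_const[OF sf] by (simp add: mult.commute)

lemma v_sum_ge: "finite A \<Longrightarrow> (\<And>i. i \<in> A \<Longrightarrow> f i \<in> polys_over F) \<Longrightarrow>
   (\<And>i. i \<in> A \<Longrightarrow> f i \<noteq> 0 \<Longrightarrow> B \<le> v (f i)) \<Longrightarrow> sum f A \<noteq> 0 \<Longrightarrow> B \<le> v (sum f A)"
proof (induction A rule: finite_induct)
  case (insert x A)
  have fx: "f x \<in> polys_over F" and sA: "sum f A \<in> polys_over F" using insert by (auto intro: po_sum[OF sf])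
  show ?case
  proof (cases "f x = 0")
    case True then show ?thesis using insert by auto
  next
    case fx0: False
    show ?thesis
    proof (cases "sum f A = 0")
      case True then show ?thesis using insert fx0 by auto
    next
      case False
      then have "B \<le> v (sum f A)" using insert by auto
      moreover have "B \<le> v (f x)" using insert fx0 by auto
      moreover have "min (v (f x)) (v (sum f A)) \<le> v (f x + sum f A)"
        using v_add[OF fx sA fx0 False] insert by auto
      ultimately have "B \<le> v (f x + sum f A)" by (meson min.boundedI order.trans)
      then show ?thesis using insert.hyps by simp
    qed
  qed
qed simp

lemma v_sum_gt: "finite A \<Longrightarrow> (\<And>i. i \<in> A \<Longrightarrow> f i \<in> polys_over F) \<Longrightarrow>
   (\<And>i. i \<in> A \<Longrightarrow> f i \<noteq> 0 \<Longrightarrow> B < v (f i)) \<Longrightarrow> sum f A \<noteq> 0 \<Longrightarrow> B < v (sum f A)"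
proof (induction A rule: finite_induct)
  case (insert x A)
  have fx: "f x \<in> polys_over F" and sA: "sum f A \<in> polys_over F" using insert by (auto intro: po_sum[OF sf])
  show ?case
  proof (cases "f x = 0")
    case True then show ?thesis using insert by auto
  next
    case fx0: False
    show ?thesis
    proof (cases "sum f A = 0")
      case True then show ?thesis using insert fx0 by auto
    next
      case False
      then have "B < v (sum f A)" using insert by auto
      moreover have "B < v (f x)" using insert fx0 by auto
      moreover have "min (v (f x)) (v (sum f A)) \<le> v (f x + sum f A)"
        using v_add[OF fx sA fx0 False] insert by auto
      ultimately have "B < v (f x + sum f A)" by (meson min_less_iff_conj less_le_trans)
      then show ?thesis using insert.hyps by simp
    qed
  qed
qed simp

lemma v_add2_ge: "p \<in> polys_over F \<Longrightarrow> q \<in> polys_over F \<Longrightarrow> (p \<noteq> 0 \<Longrightarrow> B \<le> v p) \<Longrightarrow>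
   (q \<noteq> 0 \<Longrightarrow> B \<le> v q) \<Longrightarrow> p + q \<noteq> 0 \<Longrightarrow> B \<le> v (p + q)"
  using v_add[of p q] by (cases "p = 0"; cases "q = 0") (auto simp: min_le_iff_disj intro: order.trans)

end



lemma po_synthetic_div: "is_subfield F \<Longrightarrow> p \<in> polys_over F \<Longrightarrow> c \<in> F \<Longrightarrow> synthetic_div p c \<in> polys_over F"
proof (induction p)
  case (pCons a p)
  have "p \<in> polys_over F" using pCons.prems(2)
    by (metis (no_types) coeff_pCons_Suc po_coeff po_I)
  then show ?case using pCons by (simp add: po_pCons po_poly)
qed (simp add: po_0)

definition lin :: "'a::comm_ring_1 \<Rightarrow> 'a poly" where "lin b = [:-b, 1:]"

lemma lin_nz[simp]: "lin b \<noteq> 0" by (simp add: lin_def)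
lemma degree_lin[simp]: "degree (lin (b::'a::field)) = 1" by (simp add: lin_def)
lemma lead_lin[simp]: "lead_coeff (lin (b::'a::field)) = 1" by (simp add: lin_def)
lemma coeff_lin1[simp]: "coeff (lin (b::'a::field)) (Suc 0) = 1" by (simp add: lin_def)
lemma poly_lin[simp]: "poly (lin b) x = x - b" by (simp add: lin_def)
lemma prod_lin_nz: "prod_list (map lin bs) \<noteq> (0::'a::field poly)"
  by (induction bs) auto
lemma degree_prod_lin: "degree (prod_list (map lin bs)) = length (bs::'a::field list)"
proof (induction bs)
  case (Cons b bs)
  then show ?case using degree_mult_eq[OF lin_nz prod_lin_nz, of b bs] by simp
qed simp
lemma lead_prod_lin: "lead_coeff (prod_list (map lin bs)) = (1::'a::field)"
  by (induction bs) (auto simp: lead_coeff_mult)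
lemma poly_prod_lin: "poly (prod_list (map lin bs)) x = (\<Prod>b\<leftarrow>bs. x - (b::'a::field))"
  by (induction bs) (auto simp: poly_prod_list)

lemma factorization:
  assumes cl: "is_algebraic_closure K Kb"
  shows "p \<in> polys_over Kb \<Longrightarrow> p \<noteq> 0 \<Longrightarrow>
    \<exists>c bs. c \<in> Kb \<and> c \<noteq> 0 \<and> set bs \<subseteq> Kb \<and> p = smult c (prod_list (map lin bs))"
proof (induction "degree p" arbitrary: p rule: less_induct)
  case less
  have sf: "is_subfield Kb" using cl by (simp add: is_algebraic_closure_def)
  show ?case
  proof (cases "degree p = 0")
    case True
    then obtain c where "p = [:c:]" by (metis degree_eq_zeroE)
    then show ?thesis using less.prems po_coeff[of p Kb 0]
      by (intro exI[of _ c] exI[of _ "[]"]) auto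
  next
    case False
    then obtain y where y: "y \<in> Kb" "poly p y = 0" using cl less.prems
      unfolding is_algebraic_closure_def by auto
    define q where "q = synthetic_div p y"
    have pq: "p = lin y * q" using synthetic_div_correct'[of y p] y unfolding lin_def by (simp add: q_def)
    have qK: "q \<in> polys_over Kb" using po_synthetic_div[OF sf less.prems(1) y(1)] q_def by simp
    have q0: "q \<noteq> 0" using pq less.prems by auto
    have "degree q < degree p" using False by (simp add: q_def degree_synthetic_div)
    then obtain c bs where "c \<in> Kb" "c \<noteq> 0" "set bs \<subseteq> Kb" "q = smult c (prod_list (map lin bs))"
      using less.hyps qK q0 by blast
    then show ?thesis using pq y
      by (intro exI[of _ c] exI[of _ "y # bs"]) (auto simp: mult_smult_right)
  qed
qed

lemma coeff_hasse: "coeff (hasse b f) k = of_nat ((k + b) choose b) * coeff f (k + b)"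
proof -
  have "coeff (hasse b f) k = (\<Sum>i\<in>{b..degree f}. if i = k + b then of_nat (i choose b) * coeff f i else 0)"
    unfolding hasse_def coeff_sum coeff_monom
    by (intro sum.cong refl) auto
  also have "\<dots> = (if k + b \<in> {b..degree f} then of_nat ((k + b) choose b) * coeff f (k + b) else 0)"
    by (simp add: sum.delta'[OF finite_atLeastAtMost])
  also have "\<dots> = of_nat ((k + b) choose b) * coeff f (k + b)"
    by (auto simp: coeff_eq_0)
  finally show ?thesis .
qed

lemma hasse_0[simp]: "hasse 0 f = f"
  by (rule poly_eqI) (simp add: coeff_hasse)
lemma hasse_smult: "hasse b (smult c f) = smult c (hasse b f)"
  by (rule poly_eqI) (simp add: coeff_hasse algebra_simps)
lemma hasse_1: "hasse s (1::'a::field poly) = (if s = 0 then 1 else 0)"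
  by (rule poly_eqI) (auto simp: coeff_hasse coeff_1)

lemma hasse_lin_mult: "hasse (Suc r) (lin b * P) = lin b * hasse (Suc r) P + hasse r P"
proof (rule poly_eqI)
  fix k
  have L: "\<And>Q j. coeff (lin b * Q) j = - b * coeff Q j + (case j of 0 \<Rightarrow> 0 | Suc m \<Rightarrow> coeff Q m)"
    unfolding lin_def by (simp add: coeff_pCons split: nat.split)
  show "coeff (hasse (Suc r) (lin b * P)) k = coeff (lin b * hasse (Suc r) P + hasse r P) k"
  proof (cases k)
    case 0
    then show ?thesis by (simp only: coeff_add L coeff_hasse) (simp add: algebra_simps)
  next
    case (Suc m)
    have "Suc m + Suc r = Suc (m + Suc r)" by simp
    then show ?thesis using Suc by (simp only: coeff_add L coeff_hasse) (simp add: algebra_simps)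
  qed
qed




context fixes F :: "'a::field set" and v :: "'a poly \<Rightarrow> 'g::linordered_ab_group_add"
  assumes sf: "is_subfield F" and val: "is_valuation F v"
begin

lemma v_add2_gt: "p \<in> polys_over F \<Longrightarrow> q \<in> polys_over F \<Longrightarrow> (p \<noteq> 0 \<Longrightarrow> B < v p) \<Longrightarrow>
   (q \<noteq> 0 \<Longrightarrow> B < v q) \<Longrightarrow> p + q \<noteq> 0 \<Longrightarrow> B < v (p + q)"
  using v_add[OF sf val, of p q] by (cases "p = 0"; cases "q = 0") (auto simp: min_le_iff_disj intro: less_le_trans)

lemma v_dom: "p \<in> polys_over F \<Longrightarrow> q \<in> polys_over F \<Longrightarrow> p \<noteq> 0 \<Longrightarrow> (q \<noteq> 0 \<Longrightarrow> v p < v q) \<Longrightarrow>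
   p + q \<noteq> 0 \<and> v (p + q) = v p"
proof (cases "q = 0")
  case False
  assume a: "p \<in> polys_over F" "q \<in> polys_over F" "p \<noteq> 0" "q \<noteq> 0 \<Longrightarrow> v p < v q"
  then have e: "v (p + q) = v p" using v_strict[OF sf val] False by auto
  have "p + q \<noteq> 0"
  proof
    assume "p + q = 0" then have "q = - p" by (simp add: add_eq_0_iff)
    then show False using a False v_uminus[OF sf val, of p] by auto
  qed
  then show ?thesis using e by auto
qed auto

lemma hasse_bound:
  assumes "set bs \<subseteq> F" "\<forall>b\<in>set bs. v (lin b) \<le> B"
  shows "(\<forall>s. hasse s (prod_list (map lin bs)) \<noteq> 0 \<longrightarrow>
            v (prod_list (map lin bs)) - nsmul s B \<le> v (hasse s (prod_list (map lin bs)))) \<and>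
         (\<forall>s > length (filter (\<lambda>b. v (lin b) = B) bs). hasse s (prod_list (map lin bs)) \<noteq> 0 \<longrightarrow>
            v (prod_list (map lin bs)) - nsmul s B < v (hasse s (prod_list (map lin bs)))) \<and>
         hasse (length (filter (\<lambda>b. v (lin b) = B) bs)) (prod_list (map lin bs)) \<noteq> 0 \<and>
         v (hasse (length (filter (\<lambda>b. v (lin b) = B) bs)) (prod_list (map lin bs))) =
            v (prod_list (map lin bs)) - nsmul (length (filter (\<lambda>b. v (lin b) = B) bs)) B"
  using assms
proof (induction bs)
  case Nil
  then show ?case by (auto simp: hasse_1 v_1[OF sf val])
next
  case (Cons b bs)
  define P where "P = prod_list (map lin bs)"
  define t where "t = length (filter (\<lambda>b. v (lin b) = B) bs)"
  define X where "X = lin b"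
  have bF: "b \<in> F" and bsF: "set bs \<subseteq> F" using Cons.prems by auto
  have XF: "X \<in> polys_over F" using po_lin[OF sf bF] by (simp add: X_def lin_def)
  have PF: "P \<in> polys_over F" unfolding P_def
    using bsF by (intro po_prod_list[OF sf]) (auto simp: lin_def intro: po_lin[OF sf])
  have hPF: "\<And>s. hasse s P \<in> polys_over F" using po_hasse[OF sf PF] .
  have P0: "P \<noteq> 0" by (simp add: P_def prod_lin_nz)
  have xB: "v X \<le> B" using Cons.prems by (simp add: X_def)
  have IH: "(\<forall>s. hasse s P \<noteq> 0 \<longrightarrow> v P - nsmul s B \<le> v (hasse s P))"
           "(\<forall>s > t. hasse s P \<noteq> 0 \<longrightarrow> v P - nsmul s B < v (hasse s P))"
           "hasse t P \<noteq> 0" "v (hasse t P) = v P - nsmul t B"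
    using Cons.IH Cons.prems by (auto simp: P_def t_def)
  have vP': "v (X * P) = v X + v P" using v_mult[OF sf val XF PF] P0 by (simp add: X_def)
  have step: "\<And>r. hasse (Suc r) (X * P) = X * hasse (Suc r) P + hasse r P"
    by (simp add: X_def hasse_lin_mult)
  have XhF: "\<And>s. X * hasse s P \<in> polys_over F" using po_mult[OF sf XF hPF] .
  have vXh: "\<And>s. hasse s P \<noteq> 0 \<Longrightarrow> v (X * hasse s P) = v X + v (hasse s P)"
    using v_mult[OF sf val XF hPF] by (simp add: X_def)
  have Xh0: "\<And>s. X * hasse s P \<noteq> 0 \<longleftrightarrow> hasse s P \<noteq> 0" by (simp add: X_def)
  have H1: "\<forall>s. hasse s (X * P) \<noteq> 0 \<longrightarrow> v (X * P) - nsmul s B \<le> v (hasse s (X * P))"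
  proof (intro allI impI)
    fix s assume ne: "hasse s (X * P) \<noteq> 0"
    show "v (X * P) - nsmul s B \<le> v (hasse s (X * P))"
    proof (cases s)
      case 0 then show ?thesis by simp
    next
      case (Suc r)
      have "v (X * P) - nsmul s B \<le> v (X * hasse (Suc r) P + hasse r P)"
      proof (rule v_add2_ge[OF sf val XhF hPF])
        assume "X * hasse (Suc r) P \<noteq> 0"
        then have "hasse (Suc r) P \<noteq> 0" by simp
        then show "v (X * P) - nsmul s B \<le> v (X * hasse (Suc r) P)"
          using IH(1) vXh vP' Suc by (auto simp: algebra_simps)
      next
        assume "hasse r P \<noteq> 0"
        then have "v P \<le> nsmul r B + v (hasse r P)" using IH(1) by (auto simp: algebra_simps)
        then have "v X + v P \<le> B + (nsmul r B + v (hasse r P))" using add_mono[OF xB] by blast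
        then show "v (X * P) - nsmul s B \<le> v (hasse r P)"
          using vP' Suc by (simp add: nsmul_Suc_right algebra_simps)
      next
        show "X * hasse (Suc r) P + hasse r P \<noteq> 0" using ne Suc step by simp
      qed
      then show ?thesis using Suc step by simp
    qed
  qed
  show ?case
  proof (cases "v X = B")
    case True
    have t': "length (filter (\<lambda>b. v (lin b) = B) (b # bs)) = Suc t" using True by (simp add: t_def X_def)
    have H2: "\<forall>s > Suc t. hasse s (X * P) \<noteq> 0 \<longrightarrow> v (X * P) - nsmul s B < v (hasse s (X * P))"
    proof (intro allI impI)
      fix s assume st: "Suc t < s" and ne: "hasse s (X * P) \<noteq> 0"
      then obtain r where r: "s = Suc r" "t < r" by (cases s) auto
      have "v (X * P) - nsmul s B < v (X * hasse (Suc r) P + hasse r P)"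
      proof (rule v_add2_gt[OF XhF hPF])
        assume "X * hasse (Suc r) P \<noteq> 0"
        then have "hasse (Suc r) P \<noteq> 0" by simp
        then have "v P - nsmul (Suc r) B < v (hasse (Suc r) P)" using IH(2) r(2) less_SucI le_imp_less_Suc by blast
        then show "v (X * P) - nsmul s B < v (X * hasse (Suc r) P)"
          using vXh vP' r \<open>hasse (Suc r) P \<noteq> 0\<close> by (auto simp: algebra_simps)
      next
        assume "hasse r P \<noteq> 0"
        then have "v P - nsmul r B < v (hasse r P)" using IH(2) r by auto
        then show "v (X * P) - nsmul s B < v (hasse r P)"
          using vP' r True by (simp add: nsmul_Suc_right algebra_simps)
      next
        show "X * hasse (Suc r) P + hasse r P \<noteq> 0" using ne r step by simp
      qed
      then show "v (X * P) - nsmul s B < v (hasse s (X * P))" using r step by simp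
    qed
    have d: "hasse t P + X * hasse (Suc t) P \<noteq> 0 \<and> v (hasse t P + X * hasse (Suc t) P) = v (hasse t P)"
    proof (rule v_dom[OF hPF XhF IH(3)])
      assume "X * hasse (Suc t) P \<noteq> 0"
      then have "hasse (Suc t) P \<noteq> 0" by simp
      then have "v P - nsmul (Suc t) B < v (hasse (Suc t) P)" using IH(2) by auto
      then have "nsmul t B + v (hasse t P) < nsmul t B + (B + v (hasse (Suc t) P))"
        using IH(4) by (simp add: nsmul_Suc_right algebra_simps)
      then have "v (hasse t P) < B + v (hasse (Suc t) P)" by simp
      then show "v (hasse t P) < v (X * hasse (Suc t) P)"
        using vXh \<open>hasse (Suc t) P \<noteq> 0\<close> True by simp
    qed
    have H3: "hasse (Suc t) (X * P) \<noteq> 0 \<and> v (hasse (Suc t) (X * P)) = v (X * P) - nsmul (Suc t) B"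
      using d step[of t] IH(4) vP' True by (simp add: add.commute nsmul_Suc_right algebra_simps)
    show ?thesis using H1 H2 H3 t' by (simp add: P_def X_def)
  next
    case False
    then have xB': "v X < B" using xB by simp
    have t': "length (filter (\<lambda>b. v (lin b) = B) (b # bs)) = t" using False by (simp add: t_def X_def)
    have H2: "\<forall>s > t. hasse s (X * P) \<noteq> 0 \<longrightarrow> v (X * P) - nsmul s B < v (hasse s (X * P))"
    proof (intro allI impI)
      fix s assume st: "t < s" and ne: "hasse s (X * P) \<noteq> 0"
      then obtain r where r: "s = Suc r" "t \<le> r" by (cases s) auto
      have "v (X * P) - nsmul s B < v (X * hasse (Suc r) P + hasse r P)"
      proof (rule v_add2_gt[OF XhF hPF])
        assume "X * hasse (Suc r) P \<noteq> 0"
        then have "hasse (Suc r) P \<noteq> 0" by simp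
        then have "v P - nsmul (Suc r) B < v (hasse (Suc r) P)" using IH(2) r(2) less_SucI le_imp_less_Suc by blast
        then show "v (X * P) - nsmul s B < v (X * hasse (Suc r) P)"
          using vXh vP' r \<open>hasse (Suc r) P \<noteq> 0\<close> by (auto simp: algebra_simps)
      next
        assume "hasse r P \<noteq> 0"
        then have "v P \<le> nsmul r B + v (hasse r P)" using IH(1) r by (auto simp: algebra_simps)
        then have "v X + v P < B + (nsmul r B + v (hasse r P))" using add_less_le_mono[OF xB'] by blast
        then show "v (X * P) - nsmul s B < v (hasse r P)"
          using vP' r by (simp add: nsmul_Suc_right algebra_simps)
      next
        show "X * hasse (Suc r) P + hasse r P \<noteq> 0" using ne r step by simp
      qed
      then show "v (X * P) - nsmul s B < v (hasse s (X * P))" using r step by simp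
    qed
    have H3: "hasse t (X * P) \<noteq> 0 \<and> v (hasse t (X * P)) = v (X * P) - nsmul t B"
    proof (cases t)
      case 0 then show ?thesis using P0 by (simp add: X_def)
    next
      case (Suc r)
      have d: "X * hasse t P + hasse r P \<noteq> 0 \<and> v (X * hasse t P + hasse r P) = v (X * hasse t P)"
      proof (rule v_dom[OF XhF hPF])
        show "X * hasse t P \<noteq> 0" using IH(3) by (simp add: X_def)
        assume "hasse r P \<noteq> 0"
        then have "v P - nsmul r B \<le> v (hasse r P)" using IH(1) by auto
        then have "nsmul r B + (B + v (hasse t P)) \<le> nsmul r B + v (hasse r P)"
          using IH(4) Suc by (simp add: nsmul_Suc_right algebra_simps)
        then have "B + v (hasse t P) \<le> v (hasse r P)" by simp
        moreover have "v X + v (hasse t P) < B + v (hasse t P)" using xB' by simp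
        ultimately have "v X + v (hasse t P) < v (hasse r P)" by (meson less_le_trans)
        then show "v (X * hasse t P) < v (hasse r P)"
          using vXh[OF IH(3)] by simp
      qed
      then show ?thesis using step[of r] Suc IH(4) vXh[OF IH(3)] vP' by (simp add: algebra_simps)
    qed
    show ?thesis using H1 H2 H3 t' by (simp add: P_def X_def)
  qed
qed

end



locale kps =
  fixes K Kb :: "'a::field set" and nu mu :: "'a poly \<Rightarrow> 'g::linordered_ab_group_add"
    and Q :: "'a poly" and a :: 'a
  assumes cl: "is_algebraic_closure K Kb"
    and nuv: "is_valuation K nu"
    and muv: "is_valuation Kb mu"
    and ext: "\<forall>f\<in>polys_over K. f \<noteq> 0 \<longrightarrow> mu f = nu f"
    and key: "is_key_poly K nu Q"
    and opt: "optimizing_root Kb mu Q a"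
begin

lemma sfK: "is_subfield K" using cl by (simp add: is_algebraic_closure_def)
lemma sfKb: "is_subfield Kb" using cl by (simp add: is_algebraic_closure_def)
lemma KKb: "K \<subseteq> Kb" using cl by (simp add: is_algebraic_closure_def)
lemma poK_Kb: "p \<in> polys_over K \<Longrightarrow> p \<in> polys_over Kb"
  using KKb by (auto simp: polys_over_def)
lemma QK: "Q \<in> polys_over K" using key by (simp add: is_key_poly_def)
lemma Qmon: "lead_coeff Q = 1" using key by (simp add: is_key_poly_def)
lemma Q0: "Q \<noteq> 0" using Qmon by auto
lemma aKb: "a \<in> Kb" using opt by (simp add: optimizing_root_def)
lemma Qa: "poly Q a = 0" using opt by (simp add: optimizing_root_def)
lemma degQ: "0 < degree Q"
proof (rule ccontr)
  assume "\<not> 0 < degree Q"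
  then have "degree Q = 0" by simp
  then obtain c where "Q = [:c:]" by (metis degree_eq_zeroE)
  then show False using Qmon Qa by simp
qed

definition "\<delta> = mu (lin a)"

lemma linKb: "b \<in> Kb \<Longrightarrow> lin b \<in> polys_over Kb"
  unfolding lin_def by (rule po_lin[OF sfKb])
lemma prodlinKb: "set bs \<subseteq> Kb \<Longrightarrow> prod_list (map lin bs) \<in> polys_over Kb"
  by (rule po_prod_list[OF sfKb]) (auto intro: linKb)

lemma Qfact: "\<exists>qs. set qs \<subseteq> Kb \<and> Q = prod_list (map lin qs) \<and> (\<forall>q\<in>set qs. mu (lin q) \<le> \<delta>)"
proof -
  obtain c qs where c: "c \<in> Kb" "c \<noteq> 0" "set qs \<subseteq> Kb" "Q = smult c (prod_list (map lin qs))"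
    using factorization[OF cl poK_Kb[OF QK] Q0] by blast
  have "lead_coeff Q = c * lead_coeff (prod_list (map lin qs))" using c(4) by (simp add: lead_coeff_smult)
  then have "c = 1" using Qmon by (simp add: lead_prod_lin)
  then have QP: "Q = prod_list (map lin qs)" using c by simp
  have "\<forall>q\<in>set qs. mu (lin q) \<le> \<delta>"
  proof
    fix q assume q: "q \<in> set qs"
    have "poly Q q = 0" using q QP by (auto simp: poly_prod_lin prod_list_zero_iff)
    then show "mu (lin q) \<le> \<delta>" using opt q c(3) by (auto simp: optimizing_root_def \<delta>_def lin_def)
  qed
  then show ?thesis using QP c(3) by blast
qed

lemma nu_mu: "f \<in> polys_over K \<Longrightarrow> f \<noteq> 0 \<Longrightarrow> nu f = mu f" using ext by auto

lemma K1:
  assumes hK: "h \<in> polys_over K" and h0: "h \<noteq> 0" and hdeg: "degree h < degree Q"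
    and c: "c \<in> Kb" "c \<noteq> 0" and bs: "set bs \<subseteq> Kb" and hf: "h = smult c (prod_list (map lin bs))"
  shows "\<forall>b\<in>set bs. mu (lin b) < \<delta>"
proof (rule ccontr)
  assume "\<not> (\<forall>b\<in>set bs. mu (lin b) < \<delta>)"
  then obtain b0 where b0: "b0 \<in> set bs" "\<delta> \<le> mu (lin b0)" by auto
  define B where "B = Max ((\<lambda>b. mu (lin b)) ` set bs)"
  have Bge: "\<forall>b\<in>set bs. mu (lin b) \<le> B" unfolding B_def by simp
  have Bin: "B \<in> (\<lambda>b. mu (lin b)) ` set bs" unfolding B_def using b0 by (intro Max_in) auto
  have dB: "\<delta> \<le> B" using b0 Bge order.trans by blast
  define P where "P = prod_list (map lin bs)"
  define t where "t = length (filter (\<lambda>b. mu (lin b) = B) bs)"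
  have t1: "1 \<le> t" using Bin unfolding t_def by (auto simp: length_filter_conv_card Suc_le_eq card_gt_0_iff)
        (metis (mono_tags, lifting) in_set_conv_nth)
  have tle: "t \<le> degree h" unfolding t_def using hf c by (simp add: degree_prod_lin)
  have HB: "hasse t P \<noteq> 0" "mu (hasse t P) = mu P - nsmul t B"
    using hasse_bound[OF sfKb muv bs Bge] by (auto simp: P_def t_def)
  have PKb: "P \<in> polys_over Kb" using prodlinKb[OF bs] by (simp add: P_def)
  have P0: "P \<noteq> 0" by (simp add: P_def prod_lin_nz)
  have hth: "hasse t h = smult c (hasse t P)" by (simp add: hf P_def hasse_smult)
  have ht0: "hasse t h \<noteq> 0" using hth HB c by simp
  have muh: "mu h = mu [:c:] + mu P" using v_smult[OF sfKb muv c PKb P0] hf by (simp add: P_def)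
  have muht: "mu (hasse t h) = mu h - nsmul t B"
    using hth v_smult[OF sfKb muv c po_hasse[OF sfKb PKb] HB(1)] HB(2) muh by (simp add: algebra_simps)
  obtain qs where qs: "set qs \<subseteq> Kb" "Q = prod_list (map lin qs)" "\<forall>q\<in>set qs. mu (lin q) \<le> \<delta>"
    using Qfact by blast
  have eps: "eps_ge nu h Q"
    unfolding eps_ge_def
  proof -
    have dh: "degree h \<noteq> 0" using t1 tle by simp
    have "\<forall>c'\<in>{1..degree Q}. hasse c' Q \<noteq> 0 \<longrightarrow>
                 nsmul t (nu Q - nu (hasse c' Q)) \<le> nsmul c' (nu h - nu (hasse t h))"
    proof (intro ballI impI)
      fix c' assume c'Q: "hasse c' Q \<noteq> 0"
      have hb: "mu Q - nsmul c' \<delta> \<le> mu (hasse c' Q)"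
        using hasse_bound[OF sfKb muv qs(1) qs(3)] c'Q qs(2) by auto
      have e1: "nu Q = mu Q" "nu (hasse c' Q) = mu (hasse c' Q)" "nu h = mu h" "nu (hasse t h) = mu (hasse t h)"
        using nu_mu QK Q0 c'Q po_hasse[OF sfK] hK h0 ht0 by auto
      have "mu Q - mu (hasse c' Q) \<le> nsmul c' \<delta>" using hb by (simp add: algebra_simps)
      also have "\<dots> \<le> nsmul c' B" using dB by (rule nsmul_mono)
      finally have "nsmul t (mu Q - mu (hasse c' Q)) \<le> nsmul t (nsmul c' B)" by (rule nsmul_mono)
      also have "\<dots> = nsmul c' (mu h - mu (hasse t h))" using muht by (simp add: nsmul_comm)
      finally show "nsmul t (nu Q - nu (hasse c' Q)) \<le> nsmul c' (nu h - nu (hasse t h))" using e1 by simp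
    qed
    then show "if degree h = 0 then degree Q = 0 else (\<exists>b\<in>{1..degree h}. hasse b h \<noteq> 0 \<and>
              (\<forall>c\<in>{1..degree Q}. hasse c Q \<noteq> 0 \<longrightarrow>
                 nsmul b (nu Q - nu (hasse c Q)) \<le> nsmul c (nu h - nu (hasse b h))))"
      using dh t1 tle ht0 by (auto intro!: bexI[of _ t])
  qed
  then have "degree Q \<le> degree h" using key hK h0 by (auto simp: is_key_poly_def)
  then show False using hdeg by simp
qed

end



lemma const_add: "[:x + y:] = [:x:] + [:y:]" by simp
lemma const_sum: "[:sum f A:] = sum (\<lambda>i. [:f i:]) A"
  by (induction A rule: infinite_finite_induct) (auto simp: const_add)

context kps begin

lemma linaKb: "lin a \<in> polys_over Kb" using linKb[OF aKb] .
lemma constKb: "c \<in> Kb \<Longrightarrow> [:c:] \<in> polys_over Kb" using po_const[OF sfKb] .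

lemma lin_decomp: "[:a - b:] = lin b + - lin a"
  by (simp add: lin_def)

lemma mu_lin_small: "b \<in> Kb \<Longrightarrow> mu (lin b) < \<delta> \<Longrightarrow> a \<noteq> b \<and> mu [:a - b:] = mu (lin b)"
proof -
  assume b: "b \<in> Kb" "mu (lin b) < \<delta>"
  have "a \<noteq> b" using b by (auto simp: \<delta>_def)
  moreover have "mu (lin b + - lin a) = mu (lin b)"
    using v_strict[OF sfKb muv linKb[OF b(1)] po_uminus[OF sfKb linaKb]] b
      v_uminus[OF sfKb muv linaKb] by (simp add: \<delta>_def)
  ultimately show ?thesis by (simp add: lin_decomp)
qed

lemma mu_lin_le: "b \<in> Kb \<Longrightarrow> mu (lin b) \<le> \<delta> \<Longrightarrow> a \<noteq> b \<Longrightarrow> mu (lin b) \<le> mu [:a - b:]"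
proof -
  assume b: "b \<in> Kb" "mu (lin b) \<le> \<delta>" "a \<noteq> b"
  have "lin b + - lin a \<noteq> 0" using b(3) by (simp add: lin_def)
  then have "min (mu (lin b)) (mu (- lin a)) \<le> mu (lin b + - lin a)"
    using v_add[OF sfKb muv linKb[OF b(1)] po_uminus[OF sfKb linaKb]] b lin_decomp[of b] by auto
  then show ?thesis using b v_uminus[OF sfKb muv linaKb] lin_decomp[of b] by (simp add: \<delta>_def min_def split: if_splits)
qed

lemma mu_const_prod: "set bs \<subseteq> Kb \<Longrightarrow> \<forall>b\<in>set bs. a \<noteq> b \<Longrightarrow>
   (\<Prod>b\<leftarrow>bs. a - b) \<noteq> 0 \<and> (\<Prod>b\<leftarrow>bs. a - b) \<in> Kb \<and> mu [:\<Prod>b\<leftarrow>bs. a - b:] = (\<Sum>b\<leftarrow>bs. mu [:a - b:])"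
proof (induction bs)
  case Nil then show ?case using v_1[OF sfKb muv] sf_1[OF sfKb] by (simp add: one_pCons)
next
  case (Cons b bs)
  have "a - b \<in> Kb" using Cons.prems aKb sf_diff[OF sfKb] by auto
  moreover have "a - b \<noteq> 0" using Cons.prems by auto
  ultimately show ?case using Cons v_const_mult[OF sfKb muv, of "a - b" "\<Prod>b\<leftarrow>bs. a - b"] sf_mult[OF sfKb] by auto
qed

lemma small_roots_val:
  assumes c: "c \<in> Kb" "c \<noteq> 0" and bs: "set bs \<subseteq> Kb" and sm: "\<forall>b\<in>set bs. mu (lin b) < \<delta>"
  shows "poly (smult c (prod_list (map lin bs))) a \<noteq> 0 \<and>
         mu (smult c (prod_list (map lin bs))) = mu [:poly (smult c (prod_list (map lin bs))) a:]"
proof -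
  have ne: "\<forall>b\<in>set bs. a \<noteq> b" and eq: "\<forall>b\<in>set bs. mu [:a - b:] = mu (lin b)"
    using mu_lin_small bs sm by auto
  note cp = mu_const_prod[OF bs ne]
  have "mu (prod_list (map lin bs)) = (\<Sum>b\<leftarrow>bs. mu (lin b))"
    using v_prod_list[OF sfKb muv, of bs lin] bs linKb by auto
  also have "\<dots> = (\<Sum>b\<leftarrow>bs. mu [:a - b:])" using eq by (metis (no_types, lifting) map_eq_conv)
  finally have e: "mu (prod_list (map lin bs)) = mu [:\<Prod>b\<leftarrow>bs. a - b:]" using cp by simp
  have "poly (smult c (prod_list (map lin bs))) a = c * (\<Prod>b\<leftarrow>bs. a - b)" by (simp add: poly_prod_lin)
  moreover have "mu (smult c (prod_list (map lin bs))) = mu [:c:] + mu (prod_list (map lin bs))"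
    using v_smult[OF sfKb muv c prodlinKb[OF bs] prod_lin_nz] .
  ultimately show ?thesis using e cp c v_const_mult[OF sfKb muv c(1), of "\<Prod>b\<leftarrow>bs. a - b"] by auto
qed

definition LB :: "'g \<Rightarrow> 'a poly \<Rightarrow> bool" where
  "LB B P \<longleftrightarrow> (\<forall>i. coeff P i \<noteq> 0 \<longrightarrow> B \<le> mu [:coeff P i:] + nsmul i \<delta>)"

lemma LB_mono: "LB B P \<Longrightarrow> C \<le> B \<Longrightarrow> LB C P"
  unfolding LB_def using order.trans by blast

lemma LB_add: "P \<in> polys_over Kb \<Longrightarrow> R \<in> polys_over Kb \<Longrightarrow> LB B P \<Longrightarrow> LB B R \<Longrightarrow> LB B (P + R)"
  unfolding LB_def
proof (intro allI impI)
  fix i assume P: "P \<in> polys_over Kb" and R: "R \<in> polys_over Kb"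
    and lp: "\<forall>i. coeff P i \<noteq> 0 \<longrightarrow> B \<le> mu [:coeff P i:] + nsmul i \<delta>"
    and lr: "\<forall>i. coeff R i \<noteq> 0 \<longrightarrow> B \<le> mu [:coeff R i:] + nsmul i \<delta>"
    and ne: "coeff (P + R) i \<noteq> 0"
  have "B - nsmul i \<delta> \<le> mu ([:coeff P i:] + [:coeff R i:])"
  proof (rule v_add2_ge[OF sfKb muv])
    show "[:coeff P i:] \<in> polys_over Kb" "[:coeff R i:] \<in> polys_over Kb"
      using P R by (auto intro: constKb po_coeff)
    show "[:coeff P i:] \<noteq> 0 \<Longrightarrow> B - nsmul i \<delta> \<le> mu [:coeff P i:]" using lp by (auto simp: algebra_simps)
    show "[:coeff R i:] \<noteq> 0 \<Longrightarrow> B - nsmul i \<delta> \<le> mu [:coeff R i:]" using lr by (auto simp: algebra_simps)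
    show "[:coeff P i:] + [:coeff R i:] \<noteq> 0" using ne by simp
  qed
  then show "B \<le> mu [:coeff (P + R) i:] + nsmul i \<delta>" by (simp add: algebra_simps)
qed

lemma LB_sum: "finite A \<Longrightarrow> (\<And>i. i \<in> A \<Longrightarrow> f i \<in> polys_over Kb \<and> LB B (f i)) \<Longrightarrow> LB B (sum f A)"
proof (induction A rule: finite_induct)
  case empty then show ?case by (simp add: LB_def)
next
  case (insert x A)
  then show ?case using LB_add po_sum[OF sfKb, of A f] by auto
qed

lemma LB_mult: "P \<in> polys_over Kb \<Longrightarrow> R \<in> polys_over Kb \<Longrightarrow> LB B P \<Longrightarrow> LB C R \<Longrightarrow> LB (B + C) (P * R)"
  unfolding LB_def
proof (intro allI impI)
  fix k assume P: "P \<in> polys_over Kb" and R: "R \<in> polys_over Kb"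
    and lp: "\<forall>i. coeff P i \<noteq> 0 \<longrightarrow> B \<le> mu [:coeff P i:] + nsmul i \<delta>"
    and lr: "\<forall>i. coeff R i \<noteq> 0 \<longrightarrow> C \<le> mu [:coeff R i:] + nsmul i \<delta>"
    and ne: "coeff (P * R) k \<noteq> 0"
  have cs: "[:coeff (P * R) k:] = (\<Sum>i\<le>k. [:coeff P i * coeff R (k - i):])"
    by (simp add: coeff_mult const_sum)
  have "B + C - nsmul k \<delta> \<le> mu (\<Sum>i\<le>k. [:coeff P i * coeff R (k - i):])"
  proof (rule v_sum_ge[OF sfKb muv])
    fix i assume i: "i \<in> {..k}"
    show "[:coeff P i * coeff R (k - i):] \<in> polys_over Kb"
      using P R by (auto intro!: constKb sf_mult[OF sfKb] po_coeff)
    assume nz: "[:coeff P i * coeff R (k - i):] \<noteq> 0"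
    then have n1: "coeff P i \<noteq> 0" and n2: "coeff R (k - i) \<noteq> 0" by auto
    have m: "mu [:coeff P i * coeff R (k - i):] = mu [:coeff P i:] + mu [:coeff R (k-i):]"
      using v_const_mult[OF sfKb muv] n1 n2 P R po_coeff by blast
    have "B + C \<le> (mu [:coeff P i:] + nsmul i \<delta>) + (mu [:coeff R (k-i):] + nsmul (k - i) \<delta>)"
      using lp lr n1 n2 by (intro add_mono) auto
    also have "\<dots> = mu [:coeff P i * coeff R (k - i):] + nsmul k \<delta>"
      using m i nsmul_addn[of i "k - i" \<delta>] by (simp add: algebra_simps)
    finally show "B + C - nsmul k \<delta> \<le> mu [:coeff P i * coeff R (k - i):]" by (simp add: algebra_simps)
  next
    show "(\<Sum>i\<le>k. [:coeff P i * coeff R (k - i):]) \<noteq> 0" using ne by (simp add: cs[symmetric])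
  qed simp
  then show "B + C \<le> mu [:coeff (P * R) k:] + nsmul k \<delta>" using cs by (simp add: algebra_simps)
qed

definition good :: "'a poly \<Rightarrow> bool" where
  "good h \<longleftrightarrow> h \<in> polys_over Kb \<and> h \<noteq> 0 \<and> LB (mu h) (pcompose h [:a, 1:])"

lemma shiftKb: "[:a, 1:] \<in> polys_over Kb"
  using po_pCons[OF sfKb aKb po_const[OF sfKb sf_1[OF sfKb]]] .

lemma good_mult: "good h1 \<Longrightarrow> good h2 \<Longrightarrow> good (h1 * h2)"
  unfolding good_def
  using LB_mult[of "pcompose h1 [:a,1:]" "pcompose h2 [:a,1:]"] po_pcompose[OF sfKb _ shiftKb]
    v_mult[OF sfKb muv] po_mult[OF sfKb] by (auto simp: pcompose_mult)

lemma good_const: "c \<in> Kb \<Longrightarrow> c \<noteq> 0 \<Longrightarrow> good [:c:]"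
  unfolding good_def LB_def using constKb by (auto simp: coeff_pCons split: nat.split)

lemma good_lin: "b \<in> Kb \<Longrightarrow> mu (lin b) \<le> \<delta> \<Longrightarrow> good (lin b)"
proof -
  assume b: "b \<in> Kb" "mu (lin b) \<le> \<delta>"
  have pc: "pcompose (lin b) [:a, 1:] = [:a - b, 1:]" by (simp add: lin_def pcompose_pCons)
  have "LB (mu (lin b)) [:a - b, 1:]"
    unfolding LB_def
  proof (intro allI impI)
    fix i assume ne: "coeff [:a - b, 1:] i \<noteq> 0"
    show "mu (lin b) \<le> mu [:coeff [:a - b, 1:] i:] + nsmul i \<delta>"
    proof (cases i)
      case 0 then show ?thesis using ne mu_lin_le[OF b] by simp
    next
      case (Suc j)
      then have "j = 0" using ne by (cases j) auto
      then show ?thesis using Suc b v_1[OF sfKb muv] by (simp add: one_pCons[symmetric])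
    qed
  qed
  then show ?thesis unfolding good_def using pc linKb[OF b(1)] by simp
qed

lemma good_prod_lin: "set bs \<subseteq> Kb \<Longrightarrow> \<forall>b\<in>set bs. mu (lin b) \<le> \<delta> \<Longrightarrow> good (prod_list (map lin bs))"
proof (induction bs)
  case Nil then show ?case using good_const[of 1] sf_1[OF sfKb] by (simp add: one_pCons)
next
  case (Cons b bs) then show ?case using good_mult good_lin by auto
qed

lemma good_factored: "c \<in> Kb \<Longrightarrow> c \<noteq> 0 \<Longrightarrow> set bs \<subseteq> Kb \<Longrightarrow> \<forall>b\<in>set bs. mu (lin b) \<le> \<delta> \<Longrightarrow>
   good (smult c (prod_list (map lin bs)))"
  using good_mult[OF good_const good_prod_lin] by simp

lemma good_power: "good h \<Longrightarrow> good (h ^ k)"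
  by (induction k) (auto intro: good_mult good_const[of 1, simplified one_pCons[symmetric]] sf_1[OF sfKb])

lemma pcompose_expand: "pcompose p q = (\<Sum>i\<le>degree p. smult (coeff p i) (q ^ i))"
proof -
  have "pcompose p q = poly (map_poly (\<lambda>x. [:x:]) p) q" by (rule pcompose_altdef)
  also have "\<dots> = (\<Sum>i\<le>degree p. coeff (map_poly (\<lambda>x. [:x:]) p) i * q ^ i)"
    by (simp add: poly_altdef degree_map_poly)
  also have "\<dots> = (\<Sum>i\<le>degree p. smult (coeff p i) (q ^ i))"
    by (simp add: coeff_map_poly)
  finally show ?thesis .
qed

lemma trunc_lin_good:
  assumes g: "good g"
  shows "trunc_lin mu a g = mu g"
proof -
  define G where "G = pcompose g [:a, 1:]"
  have gKb: "g \<in> polys_over Kb" and g0: "g \<noteq> 0" and lb: "LB (mu g) G" using g by (auto simp: good_def G_def)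
  have dG: "degree G = degree g" by (simp add: G_def degree_pcompose)
  have G0: "G \<noteq> 0" using g0 pcompose_eq_0[of g "[:a,1:]"] by (auto simp: G_def)
  have GKb: "G \<in> polys_over Kb" using po_pcompose[OF sfKb gKb shiftKb] by (simp add: G_def)
  have dl: "mu [:-a, 1:] = \<delta>" by (simp add: \<delta>_def lin_def)
  define S where "S = {mu [:coeff G i:] + nsmul i \<delta> | i. i \<le> degree g \<and> coeff G i \<noteq> 0}"
  have tl: "trunc_lin mu a g = Min S" unfolding trunc_lin_def S_def G_def dl ..
  have fS: "finite S" unfolding S_def by simp
  have "coeff G (degree g) \<noteq> 0" using G0 dG by (metis leading_coeff_0_iff)
  then have neS: "S \<noteq> {}" unfolding S_def by (auto intro!: exI[of _ "degree g"])
  have geS: "mu g \<le> Min S" using fS neS lb unfolding S_def LB_def by auto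
  have gexp: "g = (\<Sum>i\<le>degree G. [:coeff G i:] * lin a ^ i)"
  proof -
    have "pcompose G (lin a) = pcompose g (pcompose [:a, 1:] [:-a, 1:])"
      by (simp add: G_def lin_def pcompose_assoc)
    also have "pcompose [:a, 1:] [:-a, 1:] = [:0, 1:]" by (simp add: pcompose_pCons)
    finally have "g = pcompose G (lin a)" by simp
    then show ?thesis by (simp add: pcompose_expand)
  qed
  have "Min S \<le> mu (\<Sum>i\<le>degree G. [:coeff G i:] * lin a ^ i)"
  proof (rule v_sum_ge[OF sfKb muv])
    fix i assume i: "i \<in> {..degree G}"
    show "[:coeff G i:] * lin a ^ i \<in> polys_over Kb"
      using GKb by (intro po_mult[OF sfKb] constKb po_coeff po_power[OF sfKb] linaKb)
    assume nz: "[:coeff G i:] * lin a ^ i \<noteq> 0"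
    then have c0: "coeff G i \<noteq> 0" by auto
    have "mu ([:coeff G i:] * lin a ^ i) = mu [:coeff G i:] + nsmul i \<delta>"
      using v_mult[OF sfKb muv constKb[OF po_coeff[OF GKb]] po_power[OF sfKb linaKb]] c0
        v_power[OF sfKb muv linaKb] by (simp add: \<delta>_def)
    moreover have "mu [:coeff G i:] + nsmul i \<delta> \<in> S" using i c0 dG unfolding S_def by auto
    ultimately show "Min S \<le> mu ([:coeff G i:] * lin a ^ i)" using fS by simp
  next
    show "(\<Sum>i\<le>degree G. [:coeff G i:] * lin a ^ i) \<noteq> 0" using gexp g0 by simp
  qed simp
  then have "Min S \<le> mu g" using gexp by simp
  then show ?thesis using tl geS by simp
qed

end



lemma divmod_exists:
  assumes sf: "is_subfield F" and QF: "Q \<in> polys_over F" and Qm: "lead_coeff Q = 1"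
  shows "p \<in> polys_over F \<Longrightarrow> \<exists>q r. q \<in> polys_over F \<and> r \<in> polys_over F \<and> p = q * Q + r \<and> (r = 0 \<or> degree r < degree Q)"
proof (induction "degree p" arbitrary: p rule: less_induct)
  case less
  show ?case
  proof (cases "p = 0 \<or> degree p < degree Q")
    case True
    then show ?thesis using less.prems po_0[OF sf] by (intro exI[of _ 0] exI[of _ p]) auto
  next
    case False
    then have p0: "p \<noteq> 0" and dge: "degree Q \<le> degree p" by auto
    define m where "m = monom (lead_coeff p) (degree p - degree Q)"
    define p' where "p' = p - m * Q"
    have mF: "m \<in> polys_over F" unfolding m_def by (intro po_monom[OF sf] po_coeff less.prems)
    have p'F: "p' \<in> polys_over F" unfolding p'_def by (intro po_diff[OF sf] po_mult[OF sf] less.prems mF QF)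
    have dm: "degree (m * Q) \<le> degree p"
      using degree_mult_le[of m Q] degree_monom_le[of "lead_coeff p" "degree p - degree Q"] dge
      unfolding m_def by linarith
    have dp': "degree p' \<le> degree p" unfolding p'_def using dm by (simp add: degree_diff_le)
    have cp': "coeff p' (degree p) = 0"
      unfolding p'_def m_def using dge Qm by (simp add: coeff_monom_mult)
    show ?thesis
    proof (cases "p' = 0")
      case True
      then show ?thesis using mF po_0[OF sf] by (intro exI[of _ m] exI[of _ 0]) (auto simp: p'_def)
    next
      case False
      then have "degree p' \<noteq> degree p" using cp' by (metis leading_coeff_0_iff)
      then have "degree p' < degree p" using dp' by simp
      then obtain q r where qr: "q \<in> polys_over F" "r \<in> polys_over F" "p' = q * Q + r" "r = 0 \<or> degree r < degree Q"
        using less.hyps p'F by blast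
      show ?thesis
        using qr mF po_add[OF sf qr(1) mF]
        by (intro exI[of _ "q + m"] exI[of _ r]) (auto simp: p'_def algebra_simps)
    qed
  qed
qed

lemma divmod_closed:
  assumes sf: "is_subfield F" and QF: "Q \<in> polys_over F" and Qm: "lead_coeff Q = 1" and pF: "p \<in> polys_over F"
  shows "p div Q \<in> polys_over F \<and> p mod Q \<in> polys_over F"
proof -
  obtain q r where qr: "q \<in> polys_over F" "r \<in> polys_over F" "p = q * Q + r" "r = 0 \<or> degree r < degree Q"
    using divmod_exists[OF sf QF Qm pF] by blast
  have Q0: "Q \<noteq> 0" using Qm by auto
  have "(p div Q, p mod Q) = (q, r)"
  proof (induction rule: euclidean_relation_polyI)
    case by0 then show ?case using Q0 by simp
  next
    case divides
    then have "Q dvd r" using qr(3) by (metis dvd_add_right_iff dvd_triv_right)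
    then have "r = 0" using qr(4) dvd_imp_degree_le[of Q r] by (meson not_le)
    then show ?case using qr by simp
  next
    case euclidean_relation
    then have "r \<noteq> 0" using qr(3) by auto
    then show ?case using qr by simp
  qed
  then show ?thesis using qr by simp
qed

lemma Q_expansion: "Q \<noteq> 0 \<Longrightarrow> g = (\<Sum>i<N. Q_coeff Q g i * Q ^ i) + (g div Q ^ N) * Q ^ N"
proof (induction N)
  case 0 then show ?case by simp
next
  case (Suc N)
  define X where "X = g div Q ^ N"
  have "X = X div Q * Q + X mod Q" by simp
  moreover have "X div Q = g div Q ^ Suc N"
    using poly_div_mult_right[of g "Q ^ N" Q] unfolding X_def by (simp only: power_Suc2)
  ultimately have "X * Q ^ N = (g div Q ^ Suc N) * (Q * Q ^ N) + X mod Q * Q ^ N"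
    by (metis distrib_right mult.assoc mult.commute)
  then have "X * Q ^ N = Q_coeff Q g N * Q ^ N + (g div Q ^ Suc N) * Q ^ Suc N"
    unfolding Q_coeff_def X_def by simp
  then show ?case using Suc by (simp add: add.assoc X_def)
qed




context kps begin

lemma adj_sub: "adjoin K a \<subseteq> Kb"
  unfolding adjoin_def using sfKb KKb aKb by auto
lemma adj_poly: "h \<in> polys_over K \<Longrightarrow> poly h a \<in> adjoin K a"
  unfolding adjoin_def
proof
  fix F assume h: "h \<in> polys_over K" and "F \<in> {F. is_subfield F \<and> K \<subseteq> F \<and> a \<in> F}"
  then have F: "is_subfield F" "K \<subseteq> F" "a \<in> F" by auto
  have "h \<in> polys_over F" using h F(2) by (auto simp: polys_over_def)
  then show "poly h a \<in> F" using po_poly[OF F(1) _ F(3)] by blast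
qed
lemma adj_div: "x \<in> adjoin K a \<Longrightarrow> y \<in> adjoin K a \<Longrightarrow> x / y \<in> adjoin K a"
  unfolding adjoin_def using sf_divide by blast

lemma gdivK: "g \<in> polys_over K \<Longrightarrow> g div Q ^ i \<in> polys_over K"
proof (induction i)
  case 0 then show ?case by simp
next
  case (Suc i)
  have "g div Q ^ Suc i = (g div Q ^ i) div Q"
    using poly_div_mult_right[of g "Q ^ i" Q] by (simp only: power_Suc2)
  then show ?case using divmod_closed[OF sfK QK Qmon] Suc by simp
qed
lemma gcoeffK: "g \<in> polys_over K \<Longrightarrow> Q_coeff Q g i \<in> polys_over K"
  unfolding Q_coeff_def using divmod_closed[OF sfK QK Qmon gdivK] by blast

lemma main:
  assumes e0: "0 < e"
    and emin: "\<forall>e'. 0 < e' \<and> e' < e \<longrightarrow> nsmul e' (nu Q) \<notin> value_group mu (adjoin K a)"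
    and gK: "g \<in> polys_over K" and g0: "g \<noteq> 0" and gdeg: "degree g < degree Q * e"
  shows "trunc_lin mu a g = mu g \<and> mu g = trunc_Q nu Q g"
proof -
  define gi where "gi i = Q_coeff Q g i" for i
  define T where "T i = gi i * Q ^ i" for i
  define I where "I = {i. i \<le> degree g \<and> gi i \<noteq> 0}"
  have fI: "finite I" unfolding I_def by simp
  have giK: "\<And>i. gi i \<in> polys_over K" using gcoeffK[OF gK] by (simp add: gi_def)
  have gideg: "\<And>i. gi i \<noteq> 0 \<Longrightarrow> degree (gi i) < degree Q"
    unfolding gi_def Q_coeff_def using degree_mod_less Q0 by blast
  have QeK: "\<And>i. Q ^ i \<in> polys_over K" using po_power[OF sfK QK] .
  have dQp: "\<And>i. degree (Q ^ i) = i * degree Q" using degree_power_eq[OF Q0] .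
  have ilt: "\<And>i. gi i \<noteq> 0 \<Longrightarrow> i < e"
  proof (rule ccontr)
    fix i assume ne: "gi i \<noteq> 0" and "\<not> i < e"
    then have "e \<le> i" by simp
    then have "degree Q * e \<le> degree Q * i" by (rule mult_le_mono2)
    then have "degree g < degree Q * i" using gdeg by linarith
    then have "degree g < degree (Q ^ i)" using dQp[of i] by (simp add: mult.commute)
    then have "g div Q ^ i = 0" by (rule div_poly_less)
    then show False using ne by (simp add: gi_def Q_coeff_def)
  qed
  have gsum: "g = sum T I"
  proof -
    define N where "N = Suc (degree g)"
    have "N \<le> N * degree Q" using degQ by simp
    then have "degree g < degree (Q ^ N)" using dQp[of N] unfolding N_def by linarith
    then have "g div Q ^ N = 0" by (rule div_poly_less)
    then have "g = (\<Sum>i<N. T i)" using Q_expansion[OF Q0, of g N] by (simp add: T_def gi_def)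
    also have "\<dots> = sum T I"
      by (rule sum.mono_neutral_cong_right) (auto simp: I_def N_def T_def)
    finally show ?thesis .
  qed
  obtain qs where qs: "set qs \<subseteq> Kb" "Q = prod_list (map lin qs)" "\<forall>q\<in>set qs. mu (lin q) \<le> \<delta>"
    using Qfact by blast
  have goodQ: "good Q" using good_prod_lin[OF qs(1) qs(3)] qs(2) by simp
  have gi_facts: "\<And>i. i \<in> I \<Longrightarrow> good (gi i) \<and> poly (gi i) a \<noteq> 0 \<and> mu (gi i) = mu [:poly (gi i) a:]"
  proof -
    fix i assume i: "i \<in> I"
    then have ne: "gi i \<noteq> 0" by (simp add: I_def)
    obtain c bs where cb: "c \<in> Kb" "c \<noteq> 0" "set bs \<subseteq> Kb" "gi i = smult c (prod_list (map lin bs))"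
      using factorization[OF cl poK_Kb[OF giK] ne] by blast
    have sm: "\<forall>b\<in>set bs. mu (lin b) < \<delta>" using K1[OF giK ne gideg[OF ne] cb] .
    have "good (gi i)" using good_factored[OF cb(1-3)] sm cb(4) by (simp add: less_imp_le)
    then show "good (gi i) \<and> poly (gi i) a \<noteq> 0 \<and> mu (gi i) = mu [:poly (gi i) a:]"
      using small_roots_val[OF cb(1-3) sm] cb(4) by simp
  qed
  have TK: "\<And>i. T i \<in> polys_over K" unfolding T_def using po_mult[OF sfK giK QeK] .
  have T0: "\<And>i. i \<in> I \<Longrightarrow> T i \<noteq> 0" by (simp add: T_def I_def Q0)
  have goodT: "\<And>i. i \<in> I \<Longrightarrow> good (T i)" unfolding T_def using gi_facts good_mult good_power goodQ by blast
  have muT: "\<And>i. i \<in> I \<Longrightarrow> mu (T i) = mu [:poly (gi i) a:] + nsmul i (nu Q)"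
  proof -
    fix i assume i: "i \<in> I"
    have "mu (T i) = mu (gi i) + mu (Q ^ i)"
      unfolding T_def using v_mult[OF sfKb muv poK_Kb[OF giK] poK_Kb[OF QeK]] i Q0 by (simp add: I_def)
    also have "mu (Q ^ i) = nsmul i (nu Q)" using v_power[OF sfKb muv poK_Kb[OF QK] Q0] nu_mu[OF QK Q0] by simp
    finally show "mu (T i) = mu [:poly (gi i) a:] + nsmul i (nu Q)" using gi_facts[OF i] by simp
  qed
  have distinct: "\<And>i j. i \<in> I \<Longrightarrow> j \<in> I \<Longrightarrow> i < j \<Longrightarrow> mu (T i) \<noteq> mu (T j)"
  proof
    fix i j assume i: "i \<in> I" and j: "j \<in> I" and ij: "i < j" and eq: "mu (T i) = mu (T j)"
    define u where "u = poly (gi i) a"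
    define w where "w = poly (gi j) a"
    have uA: "u \<in> adjoin K a" and wA: "w \<in> adjoin K a" unfolding u_def w_def using adj_poly giK by auto
    have u0: "u \<noteq> 0" and w0: "w \<noteq> 0" using gi_facts i j by (auto simp: u_def w_def)
    have qA: "u / w \<in> adjoin K a" using adj_div[OF uA wA] .
    have q0: "u / w \<noteq> 0" using u0 w0 by simp
    have "mu [:u:] = mu [:(u / w) * w:]" using w0 by simp
    also have "\<dots> = mu [:u / w:] + mu [:w:]"
      using v_const_mult[OF sfKb muv] qA wA adj_sub q0 w0 by blast
    finally have uw: "mu [:u:] = mu [:u / w:] + mu [:w:]" .
    have "mu [:u:] + nsmul i (nu Q) = mu [:w:] + nsmul j (nu Q)"
      using eq muT[OF i] muT[OF j] by (simp add: u_def w_def)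
    also have "nsmul j (nu Q) = nsmul (j - i) (nu Q) + nsmul i (nu Q)"
      using ij nsmul_addn[of "j - i" i "nu Q"] by simp
    finally have "nsmul (j - i) (nu Q) = mu [:u / w:]" using uw by (simp add: algebra_simps)
    then have "nsmul (j - i) (nu Q) \<in> value_group mu (adjoin K a)"
      unfolding value_group_def using qA q0 by blast
    moreover have "0 < j - i" "j - i < e" using ij ilt[of j] j by (auto simp: I_def)
    ultimately show False using emin by blast
  qed
  have I0: "I \<noteq> {}" using gsum g0 by auto
  define m where "m = Min ((\<lambda>i. mu (T i)) ` I)"
  have "m \<in> (\<lambda>i. mu (T i)) ` I" unfolding m_def using fI I0 by (intro Min_in) auto
  then obtain i0 where i0: "i0 \<in> I" "mu (T i0) = m" by auto
  have mle: "\<And>i. i \<in> I \<Longrightarrow> m \<le> mu (T i)" unfolding m_def using fI by simp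
  have mlt: "\<And>i. i \<in> I - {i0} \<Longrightarrow> m < mu (T i)"
  proof -
    fix i assume i: "i \<in> I - {i0}"
    then have "mu (T i) \<noteq> m" using distinct[of i i0] distinct[of i0 i] i0 by (cases "i < i0") auto
    moreover have "m \<le> mu (T i)" using mle i by blast
    ultimately show "m < mu (T i)" by simp
  qed
  have split: "g = T i0 + sum T (I - {i0})" using gsum fI i0(1) by (simp add: sum.remove)
  have restK: "sum T (I - {i0}) \<in> polys_over Kb"
    by (rule po_sum[OF sfKb]) (rule poK_Kb[OF TK])
  have "T i0 + sum T (I - {i0}) \<noteq> 0 \<and> mu (T i0 + sum T (I - {i0})) = mu (T i0)"
  proof (rule v_dom[OF sfKb muv poK_Kb[OF TK] restK T0[OF i0(1)]])
    assume "sum T (I - {i0}) \<noteq> 0"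
    then show "mu (T i0) < mu (sum T (I - {i0}))"
      using v_sum_gt[OF sfKb muv, of "I - {i0}" T m] fI mlt poK_Kb[OF TK] i0(2) by auto
  qed
  then have mug: "mu g = m" using split i0(2) by simp
  have tq: "trunc_Q nu Q g = m"
  proof -
    have "{nu (Q_coeff Q g i * Q ^ i) | i. i \<le> degree g \<and> Q_coeff Q g i \<noteq> 0} = (\<lambda>i. nu (T i)) ` I"
      unfolding I_def T_def gi_def by blast
    also have "\<dots> = (\<lambda>i. mu (T i)) ` I"
      using nu_mu[OF TK T0] by (intro image_cong refl) blast
    finally have "{nu (Q_coeff Q g i * Q ^ i) | i. i \<le> degree g \<and> Q_coeff Q g i \<noteq> 0} = (\<lambda>i. mu (T i)) ` I" .
    then show ?thesis unfolding trunc_Q_def m_def by simp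
  qed
  have goodg: "good g"
    unfolding good_def
  proof (intro conjI)
    show "g \<in> polys_over Kb" using poK_Kb[OF gK] .
    show "g \<noteq> 0" using g0 .
    have "pcompose g [:a, 1:] = (\<Sum>i\<in>I. pcompose (T i) [:a, 1:])" using gsum by (metis pcompose_sum)
    moreover have "LB (mu g) (\<Sum>i\<in>I. pcompose (T i) [:a, 1:])"
    proof (rule LB_sum[OF fI])
      fix i assume i: "i \<in> I"
      show "pcompose (T i) [:a, 1:] \<in> polys_over Kb \<and> LB (mu g) (pcompose (T i) [:a, 1:])"
        using goodT[OF i] LB_mono[of "mu (T i)" _ "mu g"] mle[OF i] mug po_pcompose[OF sfKb _ shiftKb]
        unfolding good_def by auto
    qed
    ultimately show "LB (mu g) (pcompose g [:a, 1:])" by simp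
  qed
  show ?thesis using trunc_lin_good[OF goodg] mug tq by simp
qed

end

theorem lemma3p9:
  fixes K Kb :: "'a::field set"
    and nu mu :: "'a poly \<Rightarrow> 'g::linordered_ab_group_add"
    and Q :: "'a poly" and a :: 'a and n e :: nat
  assumes "is_algebraic_closure K Kb"
    and "is_valuation K nu"
    and "is_valuation Kb mu"
    and "\<forall>f\<in>polys_over K. f \<noteq> 0 \<longrightarrow> mu f = nu f"
    and "is_key_poly K nu Q"
    and "degree Q = n"
    and "optimizing_root Kb mu Q a"
    and "nu Q \<in> value_group mu Kb"
    and "0 < e"
    and "nsmul e (nu Q) \<in> value_group mu (adjoin K a)"
    and "\<forall>e'. 0 < e' \<and> e' < e \<longrightarrow> nsmul e' (nu Q) \<notin> value_group mu (adjoin K a)"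
  shows "\<forall>g\<in>polys_over K. g \<noteq> 0 \<longrightarrow> degree g < n * e \<longrightarrow>
           trunc_lin mu a g = mu g \<and> mu g = trunc_Q nu Q g"
proof -
  have k: "kps K Kb nu mu Q a" using assms(1-5,7) by (simp add: kps_def)
  show ?thesis using kps.main[OF k assms(9) assms(11)] assms(6) by blast
qed

end
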